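(* Let $P$ be a continuous poset and $(T_\varepsilon)_{\varepsilon\ge0}$ a superlinear family of Scott-continuous translations on $P$ satisfying TR2. Then $d_a(M,\underline M)=0$ and $d_a(M,\overline M)=0$ for every persistence module $M$ over $P$. In particular $d_a(M,0)=0$ whenever $M$ is ephemeral.
   Context: Let $P$ be a poset (as a category, $p\to q$ iff $p\le q$). A subset is directed if nonempty and any two elements have an upper bound in it. $x\ll y$ means: for every directed $D$ whose supremum exists with $y\le\sup D$, some $d\in D$ satisfies $x\le d$. $P$ is continuous if for each $p$ the set $\{x:x\ll p\}$ is directed with supremum $p$. A map $f\colon P\to P$ is Scott-continuous if it is order-preserving and $f(\sup D)=\sup f(D)$ for every directed $D$ whose supremum exists. A translation is an order-preserving $T\colon P\to P$ with $p\le T(p)$ for all $p$. A family $(T_\varepsilon)_{\varepsilon\ge0}$ of translations is superlinear if $T_\varepsilon(T_\delta(p))\le T_{\varepsilon+\delta}(p)$ for all $p$ and $\varepsilon,\delta\ge0$. TR2: $x\ll T_\varepsilon(x)$ for all $x\in P$ and $\varepsilon>0$. $k$ is a commutative ring with unity; persistence modules are functors $M$ from $P$ to $k$-modules. For a translation $T$, $T^*M=M\circ T$, with natural morphism $M\to T^*M$ given by $M(p\le T(p))$. Persistence modules $M,N$ are $\varepsilon$-interleaved if there are morphisms $f\colon M\to T_\varepsilon^*N$, $g\colon N\to T_\varepsilon^*M$ with $T_\varepsilon^*(g)\circ f$ equal to the natural morphism $M\to T_\varepsilon^*T_\varepsilon^*M$ and $T_\varepsilon^*(f)\circ g$ equal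 to the natural morphism $N\to T_\varepsilon^*T_\varepsilon^*N$. $d_a(M,N)$ is the infimum of $\varepsilon\ge0$ for which $M,N$ are $\varepsilon$-interleaved ($\infty$ if none). $\underline M_p=\varprojlim_{x\gg p}M_x$, $\overline M_p=\varinjlim_{x\ll p}M_x$. $M$ is ephemeral if $M(p\le q)=0$ for all $p\ll q$. *)

theory Defs
  imports "HOL-Algebra.Algebra" "HOL-Library.Extended_Real"
begin

definition is_sup :: "'p::order set \<Rightarrow> 'p \<Rightarrow> bool" where
  "is_sup D s \<longleftrightarrow> (\<forall>d\<in>D. d \<le> s) \<and> (\<forall>u. (\<forall>d\<in>D. d \<le> u) \<longrightarrow> s \<le> u)"

definition directed :: "'p::order set \<Rightarrow> bool" where
  "directed D \<longleftrightarrow> D \<noteq> {} \<and> (\<forall>a\<in>D. \<forall>b\<in>D. \<exists>c\<in>D. a \<le> c \<and> b \<le> c)"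

definition way_below :: "'p::order \<Rightarrow> 'p \<Rightarrow> bool" (infix \<open>\<lless>\<close> 50) where
  "x \<lless> y \<longleftrightarrow> (\<forall>D s. directed D \<longrightarrow> is_sup D s \<longrightarrow> y \<le> s \<longrightarrow> (\<exists>d\<in>D. x \<le> d))"

definition continuous_poset :: "'p::order itself \<Rightarrow> bool" where
  "continuous_poset TYPE('p) \<longleftrightarrow>
     (\<forall>p::'p. directed {x. x \<lless> p} \<and> is_sup {x. x \<lless> p} p)"

definition scott_continuous :: "('p::order \<Rightarrow> 'p) \<Rightarrow> bool" where
  "scott_continuous f \<longleftrightarrow> mono f \<and>
     (\<forall>D s. directed D \<longrightarrow> is_sup D s \<longrightarrow> is_sup (f ` D) (f s))"

definition translation :: "('p::order \<Rightarrow> 'p) \<Rightarrow> bool" where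
  "translation T \<longleftrightarrow> mono T \<and> (\<forall>p. p \<le> T p)"

definition superlinear :: "(real \<Rightarrow> 'p::order \<Rightarrow> 'p) \<Rightarrow> bool" where
  "superlinear T \<longleftrightarrow> (\<forall>\<epsilon> \<delta> p. \<epsilon> \<ge> 0 \<longrightarrow> \<delta> \<ge> 0 \<longrightarrow> T \<epsilon> (T \<delta> p) \<le> T (\<epsilon> + \<delta>) p)"

definition TR2 :: "(real \<Rightarrow> 'p::order \<Rightarrow> 'p) \<Rightarrow> bool" where
  "TR2 T \<longleftrightarrow> (\<forall>\<epsilon> x. \<epsilon> > 0 \<longrightarrow> x \<lless> T \<epsilon> x)"

text \<open>A persistence module over the poset 'p with values in R-modules is a pair
  (F, phi): F p is an R-module (HOL-Algebra record, element type 'm) and phi p q is the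
  structure map M(p \<le> q). Maps are only relevant on carriers.\<close>

type_synonym ('p, 'k, 'm) pmod = "('p \<Rightarrow> ('k, 'm) module) \<times> ('p \<Rightarrow> 'p \<Rightarrow> 'm \<Rightarrow> 'm)"

definition linear_map :: "'k ring \<Rightarrow> ('k, 'a) module \<Rightarrow> ('k, 'b) module \<Rightarrow> ('a \<Rightarrow> 'b) \<Rightarrow> bool" where
  "linear_map R A B f \<longleftrightarrow>
     f \<in> carrier A \<rightarrow> carrier B \<and>
     (\<forall>x\<in>carrier A. \<forall>y\<in>carrier A. f (x \<oplus>\<^bsub>A\<^esub> y) = f x \<oplus>\<^bsub>B\<^esub> f y) \<and>
     (\<forall>c\<in>carrier R. \<forall>x\<in>carrier A. f (c \<odot>\<^bsub>A\<^esub> x) = c \<odot>\<^bsub>B\<^esub> f x)"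

definition is_pmod :: "'k ring \<Rightarrow> ('p::order, 'k, 'm) pmod \<Rightarrow> bool" where
  "is_pmod R M \<longleftrightarrow>
     (\<forall>p. module R (fst M p)) \<and>
     (\<forall>p q. p \<le> q \<longrightarrow> linear_map R (fst M p) (fst M q) (snd M p q)) \<and>
     (\<forall>p. \<forall>x\<in>carrier (fst M p). snd M p p x = x) \<and>
     (\<forall>p q r. p \<le> q \<longrightarrow> q \<le> r \<longrightarrow>
        (\<forall>x\<in>carrier (fst M p). snd M q r (snd M p q x) = snd M p r x))"

definition is_pmorph :: "'k ring \<Rightarrow> ('p::order, 'k, 'a) pmod \<Rightarrow> ('p, 'k, 'b) pmod
    \<Rightarrow> ('p \<Rightarrow> 'a \<Rightarrow> 'b) \<Rightarrow> bool" where
  "is_pmorph R M N f \<longleftrightarrow>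
     (\<forall>p. linear_map R (fst M p) (fst N p) (f p)) \<and>
     (\<forall>p q. p \<le> q \<longrightarrow> (\<forall>x\<in>carrier (fst M p). f q (snd M p q x) = snd N p q (f p x)))"

definition pullback :: "('p \<Rightarrow> 'p) \<Rightarrow> ('p, 'k, 'm) pmod \<Rightarrow> ('p, 'k, 'm) pmod" where
  "pullback T M = ((\<lambda>p. fst M (T p)), (\<lambda>p q. snd M (T p) (T q)))"

definition interleaved :: "'k ring \<Rightarrow> (real \<Rightarrow> 'p::order \<Rightarrow> 'p) \<Rightarrow> real
    \<Rightarrow> ('p, 'k, 'a) pmod \<Rightarrow> ('p, 'k, 'b) pmod \<Rightarrow> bool" where
  "interleaved R T \<epsilon> M N \<longleftrightarrow>
     (\<exists>f g. is_pmorph R M (pullback (T \<epsilon>) N) f \<and> is_pmorph R N (pullback (T \<epsilon>) M) g \<and>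
        (\<forall>p. \<forall>x\<in>carrier (fst M p). g (T \<epsilon> p) (f p x) = snd M p (T \<epsilon> (T \<epsilon> p)) x) \<and>
        (\<forall>p. \<forall>y\<in>carrier (fst N p). f (T \<epsilon> p) (g p y) = snd N p (T \<epsilon> (T \<epsilon> p)) y))"

definition interleaving_dist :: "'k ring \<Rightarrow> (real \<Rightarrow> 'p::order \<Rightarrow> 'p)
    \<Rightarrow> ('p, 'k, 'a) pmod \<Rightarrow> ('p, 'k, 'b) pmod \<Rightarrow> ereal" where
  "interleaving_dist R T M N = Inf (ereal ` {\<epsilon>. \<epsilon> \<ge> 0 \<and> interleaved R T \<epsilon> M N})"

definition ephemeral :: "('p::order, 'k, 'm) pmod \<Rightarrow> bool" where
  "ephemeral M \<longleftrightarrow> (\<forall>p q. p \<lless> q \<longrightarrow> (\<forall>x\<in>carrier (fst M p). snd M p q x = \<zero>\<^bsub>fst M q\<^esub>))"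

definition zero_module :: "('k, unit) module" where
  "zero_module = \<lparr>carrier = {()}, monoid.mult = (\<lambda>_ _. ()), one = (),
                  ring.zero = (), ring.add = (\<lambda>_ _. ()), smult = (\<lambda>_ _. ())\<rparr>"

definition zero_pmod :: "('p, 'k, unit) pmod" where
  "zero_pmod = ((\<lambda>p. zero_module), (\<lambda>p q x. ()))"

text \<open>Elements: compatible families (s_x) for p \<lless> x, extended by undefined elsewhere.\<close>
definition lim_module :: "'k ring \<Rightarrow> ('p::order, 'k, 'm) pmod \<Rightarrow> 'p \<Rightarrow> ('k, 'p \<Rightarrow> 'm) module" where
  "lim_module R M p =
     \<lparr>carrier = {s. (\<forall>x. p \<lless> x \<longrightarrow> s x \<in> carrier (fst M x)) \<and>
                    (\<forall>x y. p \<lless> x \<longrightarrow> x \<le> y \<longrightarrow> s y = snd M x y (s x)) \<and>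
                    (\<forall>x. \<not> p \<lless> x \<longrightarrow> s x = undefined)},
      monoid.mult = (\<lambda>s t. s),
      one = (\<lambda>x. if p \<lless> x then \<zero>\<^bsub>fst M x\<^esub> else undefined),
      ring.zero = (\<lambda>x. if p \<lless> x then \<zero>\<^bsub>fst M x\<^esub> else undefined),
      ring.add = (\<lambda>s t x. if p \<lless> x then s x \<oplus>\<^bsub>fst M x\<^esub> t x else undefined),
      smult = (\<lambda>c s x. if p \<lless> x then c \<odot>\<^bsub>fst M x\<^esub> s x else undefined)\<rparr>"

definition lower_pmod :: "'k ring \<Rightarrow> ('p::order, 'k, 'm) pmod \<Rightarrow> ('p, 'k, 'p \<Rightarrow> 'm) pmod" where
  "lower_pmod R M = (lim_module R M, (\<lambda>p q s x. if q \<lless> x then s x else undefined))"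

text \<open>Direct sum of the M_x over x \<lless> p (finitely supported families), quotiented by the
  submodule generated by the relations incl_x(m) - incl_y(M(x \<le> y) m).\<close>
definition dsum_module :: "'k ring \<Rightarrow> ('p::order, 'k, 'm) pmod \<Rightarrow> 'p \<Rightarrow> ('k, 'p \<Rightarrow> 'm) module" where
  "dsum_module R M p =
     \<lparr>carrier = {s. (\<forall>x. x \<lless> p \<longrightarrow> s x \<in> carrier (fst M x)) \<and>
                    (\<forall>x. \<not> x \<lless> p \<longrightarrow> s x = undefined) \<and>
                    finite {x. x \<lless> p \<and> s x \<noteq> \<zero>\<^bsub>fst M x\<^esub>}},
      monoid.mult = (\<lambda>s t. s),
      one = (\<lambda>x. if x \<lless> p then \<zero>\<^bsub>fst M x\<^esub> else undefined),
      ring.zero = (\<lambda>x. if x \<lless> p then \<zero>\<^bsub>fst M x\<^esub> else undefined),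
      ring.add = (\<lambda>s t x. if x \<lless> p then s x \<oplus>\<^bsub>fst M x\<^esub> t x else undefined),
      smult = (\<lambda>c s x. if x \<lless> p then c \<odot>\<^bsub>fst M x\<^esub> s x else undefined)\<rparr>"

definition dsum_incl :: "('p::order, 'k, 'm) pmod \<Rightarrow> 'p \<Rightarrow> 'p \<Rightarrow> 'm \<Rightarrow> 'p \<Rightarrow> 'm" where
  "dsum_incl M p x m = (\<lambda>y. if y = x then m else if y \<lless> p then \<zero>\<^bsub>fst M y\<^esub> else undefined)"

definition colim_relations :: "'k ring \<Rightarrow> ('p::order, 'k, 'm) pmod \<Rightarrow> 'p \<Rightarrow> ('p \<Rightarrow> 'm) set" where
  "colim_relations R M p =
     \<Inter>{H. submodule H R (dsum_module R M p) \<and>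
          {dsum_incl M p x m \<ominus>\<^bsub>dsum_module R M p\<^esub> dsum_incl M p y (snd M x y m) | x y m.
             x \<lless> p \<and> y \<lless> p \<and> x \<le> y \<and> m \<in> carrier (fst M x)} \<subseteq> H}"

definition colim_module :: "'k ring \<Rightarrow> ('p::order, 'k, 'm) pmod \<Rightarrow> 'p \<Rightarrow> ('k, ('p \<Rightarrow> 'm) set) module" where
  "colim_module R M p =
     (let D = dsum_module R M p; K = colim_relations R M p in
     \<lparr>carrier = {K +>\<^bsub>D\<^esub> a | a. a \<in> carrier D},
      monoid.mult = (\<lambda>A B. A),
      one = K,
      ring.zero = K,
      ring.add = (\<lambda>A B. \<Union>{K +>\<^bsub>D\<^esub> (a \<oplus>\<^bsub>D\<^esub> b) | a b. a \<in> A \<and> b \<in> B}),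
      smult = (\<lambda>c A. \<Union>{K +>\<^bsub>D\<^esub> (c \<odot>\<^bsub>D\<^esub> a) | a. a \<in> A})\<rparr>)"

text \<open>Structure map upper M(p \<le> q): extend representatives by zero and take the class.\<close>
definition colim_map :: "'k ring \<Rightarrow> ('p::order, 'k, 'm) pmod \<Rightarrow> 'p \<Rightarrow> 'p
    \<Rightarrow> ('p \<Rightarrow> 'm) set \<Rightarrow> ('p \<Rightarrow> 'm) set" where
  "colim_map R M p q A =
     \<Union>{colim_relations R M q +>\<^bsub>dsum_module R M q\<^esub>
          (\<lambda>x. if x \<lless> p then a x else if x \<lless> q then \<zero>\<^bsub>fst M x\<^esub> else undefined) | a. a \<in> A}"

definition upper_pmod :: "'k ring \<Rightarrow> ('p::order, 'k, 'm) pmod \<Rightarrow> ('p, 'k, ('p \<Rightarrow> 'm) set) pmod" where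
  "upper_pmod R M = (colim_module R M, colim_map R M)"

end

theory Submission
  imports Defs
begin


lemma wb_le: "x \<lless> y \<Longrightarrow> (x::'p::order) \<le> y"
  unfolding way_below_def
  by (drule spec[of _ "{y}"], drule spec[of _ y]) (auto simp: directed_def is_sup_def)

lemma wb_le_trans: "(x::'p::order) \<le> y \<Longrightarrow> y \<lless> z \<Longrightarrow> x \<lless> z"
  unfolding way_below_def by (meson order_trans)

lemma wb_trans_le: "(x::'p::order) \<lless> y \<Longrightarrow> y \<le> z \<Longrightarrow> x \<lless> z"
  unfolding way_below_def by (meson order_trans)

lemma lin_zero:
  assumes "linear_map R A B f" "abelian_group A" "abelian_group B"
  shows "f \<zero>\<^bsub>A\<^esub> = \<zero>\<^bsub>B\<^esub>"
proof -
  interpret A: abelian_group A by fact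
  interpret B: abelian_group B by fact
  have c: "f \<zero>\<^bsub>A\<^esub> \<in> carrier B" using assms(1) unfolding linear_map_def by auto
  have "f \<zero>\<^bsub>A\<^esub> = f \<zero>\<^bsub>A\<^esub> \<oplus>\<^bsub>B\<^esub> f \<zero>\<^bsub>A\<^esub>"
    using assms(1) unfolding linear_map_def by (metis A.l_zero A.zero_closed)
  then show ?thesis using c by (metis B.l_zero B.add.l_cancel_one B.zero_closed)
qed

definition additive :: "('a,'c) ring_scheme \<Rightarrow> ('b,'d) ring_scheme \<Rightarrow> ('a \<Rightarrow> 'b) \<Rightarrow> bool" where
  "additive A B f \<longleftrightarrow> f \<in> carrier A \<rightarrow> carrier B \<and>
     (\<forall>x\<in>carrier A. \<forall>y\<in>carrier A. f (x \<oplus>\<^bsub>A\<^esub> y) = f x \<oplus>\<^bsub>B\<^esub> f y)"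

lemma additive_zero:
  assumes "additive A B f" "abelian_group A" "abelian_group B"
  shows "f \<zero>\<^bsub>A\<^esub> = \<zero>\<^bsub>B\<^esub>"
proof -
  interpret A: abelian_group A by fact
  interpret B: abelian_group B by fact
  have c: "f \<zero>\<^bsub>A\<^esub> \<in> carrier B" using assms(1) unfolding additive_def by auto
  have "f \<zero>\<^bsub>A\<^esub> = f \<zero>\<^bsub>A\<^esub> \<oplus>\<^bsub>B\<^esub> f \<zero>\<^bsub>A\<^esub>"
    using assms(1) unfolding additive_def by (metis A.l_zero A.zero_closed)
  then show ?thesis using c by (metis B.l_zero B.add.l_cancel_one B.zero_closed)
qed

lemma additive_inv:
  assumes "additive A B f" "abelian_group A" "abelian_group B" "x \<in> carrier A"
  shows "f (\<ominus>\<^bsub>A\<^esub> x) = \<ominus>\<^bsub>B\<^esub> f x"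
proof -
  interpret A: abelian_group A by fact
  interpret B: abelian_group B by fact
  have c: "\<And>y. y \<in> carrier A \<Longrightarrow> f y \<in> carrier B" using assms(1) unfolding additive_def by auto
  have "f (\<ominus>\<^bsub>A\<^esub> x) \<oplus>\<^bsub>B\<^esub> f x = \<zero>\<^bsub>B\<^esub>"
    using assms additive_zero[OF assms(1-3)] unfolding additive_def
    by (metis A.a_inv_closed A.l_neg)
  then show ?thesis using c assms(4) by (metis A.a_inv_closed B.minus_equality)
qed

lemma additive_minus:
  assumes "additive A B f" "abelian_group A" "abelian_group B" "x \<in> carrier A" "y \<in> carrier A"
  shows "f (x \<ominus>\<^bsub>A\<^esub> y) = f x \<ominus>\<^bsub>B\<^esub> f y"
proof -
  interpret A: abelian_group A by fact
  interpret B: abelian_group B by fact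
  show ?thesis using assms additive_inv[OF assms(1-3) assms(5)] unfolding additive_def a_minus_def
    by (metis A.a_inv_closed)
qed

lemma linear_additive: "linear_map R A B f \<Longrightarrow> additive A B f"
  unfolding linear_map_def additive_def by auto

lemma dist_zero:
  assumes "\<And>e. e > 0 \<Longrightarrow> interleaved R T e M N"
  shows "interleaving_dist R T M N = 0"
proof -
  let ?S = "{\<epsilon>. \<epsilon> \<ge> 0 \<and> interleaved R T \<epsilon> M N}"
  have lo: "0 \<le> Inf (ereal ` ?S)" by (rule Inf_greatest) auto
  have up: "Inf (ereal ` ?S) \<le> ereal e" if "e > 0" for e
    by (rule Inf_lower) (use that assms in auto)
  have "Inf (ereal ` ?S) \<le> 0"
    by (rule ereal_le_epsilon2) (use up in \<open>simp add: zero_ereal_def\<close>)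
  then show ?thesis unfolding interleaving_dist_def using lo by simp
qed

lemma lim_add: "s \<oplus>\<^bsub>lim_module R M p\<^esub> u = (\<lambda>x. if p \<lless> x then s x \<oplus>\<^bsub>fst M x\<^esub> u x else undefined)"
  unfolding lim_module_def by simp
lemma lim_smult: "c \<odot>\<^bsub>lim_module R M p\<^esub> u = (\<lambda>x. if p \<lless> x then c \<odot>\<^bsub>fst M x\<^esub> u x else undefined)"
  unfolding lim_module_def by simp
lemma lim_car1: "s \<in> carrier (lim_module R M p) \<Longrightarrow> p \<lless> x \<Longrightarrow> s x \<in> carrier (fst M x)"
  unfolding lim_module_def partial_object.simps mem_Collect_eq by blast
lemma lim_car2: "s \<in> carrier (lim_module R M p) \<Longrightarrow> p \<lless> x \<Longrightarrow> x \<le> y \<Longrightarrow> s y = snd M x y (s x)"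
  unfolding lim_module_def partial_object.simps mem_Collect_eq by blast
lemma lower_fst: "fst (lower_pmod R M) = lim_module R M" unfolding lower_pmod_def by simp
lemma lower_snd: "snd (lower_pmod R M) = (\<lambda>p q s x. if q \<lless> x then s x else undefined)"
  unfolding lower_pmod_def by simp
lemma pb_fst: "fst (pullback t N) = (\<lambda>p. fst N (t p))" unfolding pullback_def by simp
lemma pb_snd: "snd (pullback t N) = (\<lambda>p q. snd N (t p) (t q))" unfolding pullback_def by simp

section \<open>cosets\<close>

lemma Union_eqI': "(\<And>A. A \<in> SS \<Longrightarrow> A = XX) \<Longrightarrow> XX \<in> SS \<Longrightarrow> Union SS = XX" by blast

lemma cos_self:
  assumes "module R D" "submodule H R D" "a \<in> carrier D"
  shows "a \<in> H +>\<^bsub>D\<^esub> a"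
proof -
  interpret D: module R D by fact
  have "\<zero>\<^bsub>D\<^esub> \<in> H" using subgroup.one_closed[OF submodule.axioms(1)[OF assms(2)]] by simp
  then have "\<zero>\<^bsub>D\<^esub> \<oplus>\<^bsub>D\<^esub> a \<in> H +>\<^bsub>D\<^esub> a"
    using D.a_rcosI D.submoduleE(1)[OF assms(2)] assms(3) by blast
  then show ?thesis using assms(3) by simp
qed

lemma cos_in:
  assumes "module R D" "submodule H R D" "a \<in> carrier D" "k \<in> H"
  shows "k \<oplus>\<^bsub>D\<^esub> a \<in> H +>\<^bsub>D\<^esub> a"
proof -
  interpret D: module R D by fact
  show ?thesis using D.a_rcosI D.submoduleE(1)[OF assms(2)] assms(3,4) by blast
qed

lemma cos_repr:
  assumes "module R D" "submodule H R D" "a \<in> carrier D" "b \<in> H +>\<^bsub>D\<^esub> a"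
  shows "H +>\<^bsub>D\<^esub> b = H +>\<^bsub>D\<^esub> a"
proof -
  interpret D: module R D by fact
  show ?thesis using D.a_repr_independence[OF assms(4,3) submodule.axioms(1)[OF assms(2)]] by (rule sym)
qed

lemma cos_elem:
  assumes "b \<in> H +>\<^bsub>D\<^esub> a"
  shows "\<exists>k\<in>H. b = k \<oplus>\<^bsub>D\<^esub> a"
  using assms unfolding a_r_coset_def' by blast

lemma cos_eq:
  assumes "module R D" "submodule H R D" "a \<in> carrier D" "b \<in> carrier D" "a \<ominus>\<^bsub>D\<^esub> b \<in> H"
  shows "H +>\<^bsub>D\<^esub> a = H +>\<^bsub>D\<^esub> b"
proof -
  interpret D: module R D by fact
  have "a = (a \<ominus>\<^bsub>D\<^esub> b) \<oplus>\<^bsub>D\<^esub> b" using assms(3,4)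
    by (simp add: a_minus_def D.a_assoc D.l_neg)
  then have "a \<in> H +>\<^bsub>D\<^esub> b" using cos_in[OF assms(1,2,4,5)] by simp
  then show ?thesis by (rule cos_repr[OF assms(1,2,4)])
qed

lemma cos_add:
  assumes "module R D" "submodule H R D" "a0 \<in> carrier D" "b0 \<in> carrier D"
  shows "\<Union>{H +>\<^bsub>D\<^esub> (a \<oplus>\<^bsub>D\<^esub> b) | a b. a \<in> H +>\<^bsub>D\<^esub> a0 \<and> b \<in> H +>\<^bsub>D\<^esub> b0}
         = H +>\<^bsub>D\<^esub> (a0 \<oplus>\<^bsub>D\<^esub> b0)"
proof -
  interpret D: module R D by fact
  have Hc: "H \<subseteq> carrier D" using D.submoduleE(1)[OF assms(2)] .
  have *: "H +>\<^bsub>D\<^esub> (a \<oplus>\<^bsub>D\<^esub> b) = H +>\<^bsub>D\<^esub> (a0 \<oplus>\<^bsub>D\<^esub> b0)"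
    if a: "a \<in> H +>\<^bsub>D\<^esub> a0" and b: "b \<in> H +>\<^bsub>D\<^esub> b0" for a b
  proof -
    obtain k where k: "k \<in> H" "a = k \<oplus>\<^bsub>D\<^esub> a0" using cos_elem[OF a] by blast
    obtain l where l: "l \<in> H" "b = l \<oplus>\<^bsub>D\<^esub> b0" using cos_elem[OF b] by blast
    have kl: "k \<oplus>\<^bsub>D\<^esub> l \<in> H" using D.submoduleE(5)[OF assms(2)] k l by blast
    have "a \<oplus>\<^bsub>D\<^esub> b = (k \<oplus>\<^bsub>D\<^esub> l) \<oplus>\<^bsub>D\<^esub> (a0 \<oplus>\<^bsub>D\<^esub> b0)"
      using k l Hc assms(3,4) by (simp add: subsetD D.a_ac)
    then have "a \<oplus>\<^bsub>D\<^esub> b \<in> H +>\<^bsub>D\<^esub> (a0 \<oplus>\<^bsub>D\<^esub> b0)"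
      using cos_in[OF assms(1,2) _ kl] assms(3,4) by simp
    then show ?thesis by (rule cos_repr[OF assms(1,2) D.a_closed[OF assms(3,4)]])
  qed
  have a0: "a0 \<in> H +>\<^bsub>D\<^esub> a0" by (rule cos_self[OF assms(1,2,3)])
  have b0: "b0 \<in> H +>\<^bsub>D\<^esub> b0" by (rule cos_self[OF assms(1,2,4)])
  show ?thesis
  proof (rule Union_eqI')
    fix A assume "A \<in> {H +>\<^bsub>D\<^esub> (a \<oplus>\<^bsub>D\<^esub> b) | a b. a \<in> H +>\<^bsub>D\<^esub> a0 \<and> b \<in> H +>\<^bsub>D\<^esub> b0}"
    then obtain a b where "A = H +>\<^bsub>D\<^esub> (a \<oplus>\<^bsub>D\<^esub> b)" "a \<in> H +>\<^bsub>D\<^esub> a0" "b \<in> H +>\<^bsub>D\<^esub> b0" by blast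
    then show "A = H +>\<^bsub>D\<^esub> (a0 \<oplus>\<^bsub>D\<^esub> b0)" using *[of a b] by simp
  next
    show "H +>\<^bsub>D\<^esub> (a0 \<oplus>\<^bsub>D\<^esub> b0) \<in> {H +>\<^bsub>D\<^esub> (a \<oplus>\<^bsub>D\<^esub> b) | a b. a \<in> H +>\<^bsub>D\<^esub> a0 \<and> b \<in> H +>\<^bsub>D\<^esub> b0}"
      using a0 b0 by blast
  qed
qed

lemma cos_smult:
  assumes "module R D" "submodule H R D" "a0 \<in> carrier D" "c \<in> carrier R"
  shows "\<Union>{H +>\<^bsub>D\<^esub> (c \<odot>\<^bsub>D\<^esub> a) | a. a \<in> H +>\<^bsub>D\<^esub> a0} = H +>\<^bsub>D\<^esub> (c \<odot>\<^bsub>D\<^esub> a0)"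
proof -
  interpret D: module R D by fact
  have Hc: "H \<subseteq> carrier D" using D.submoduleE(1)[OF assms(2)] .
  have *: "H +>\<^bsub>D\<^esub> (c \<odot>\<^bsub>D\<^esub> a) = H +>\<^bsub>D\<^esub> (c \<odot>\<^bsub>D\<^esub> a0)"
    if a: "a \<in> H +>\<^bsub>D\<^esub> a0" for a
  proof -
    obtain k where k: "k \<in> H" "a = k \<oplus>\<^bsub>D\<^esub> a0" using cos_elem[OF a] by blast
    have ck: "c \<odot>\<^bsub>D\<^esub> k \<in> H" using D.submoduleE(4)[OF assms(2)] k assms(4) by blast
    have "c \<odot>\<^bsub>D\<^esub> a = (c \<odot>\<^bsub>D\<^esub> k) \<oplus>\<^bsub>D\<^esub> (c \<odot>\<^bsub>D\<^esub> a0)"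
      using k Hc assms(3,4) by (simp add: subsetD D.smult_r_distr)
    then have "c \<odot>\<^bsub>D\<^esub> a \<in> H +>\<^bsub>D\<^esub> (c \<odot>\<^bsub>D\<^esub> a0)"
      using cos_in[OF assms(1,2) _ ck] assms(3,4) by simp
    then show ?thesis by (rule cos_repr[OF assms(1,2) D.smult_closed[OF assms(4,3)]])
  qed
  have a0: "a0 \<in> H +>\<^bsub>D\<^esub> a0" by (rule cos_self[OF assms(1,2,3)])
  show ?thesis
  proof (rule Union_eqI')
    fix A assume "A \<in> {H +>\<^bsub>D\<^esub> (c \<odot>\<^bsub>D\<^esub> a) | a. a \<in> H +>\<^bsub>D\<^esub> a0}"
    then obtain a where "A = H +>\<^bsub>D\<^esub> (c \<odot>\<^bsub>D\<^esub> a)" "a \<in> H +>\<^bsub>D\<^esub> a0" by blast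
    then show "A = H +>\<^bsub>D\<^esub> (c \<odot>\<^bsub>D\<^esub> a0)" using *[of a] by simp
  next
    show "H +>\<^bsub>D\<^esub> (c \<odot>\<^bsub>D\<^esub> a0) \<in> {H +>\<^bsub>D\<^esub> (c \<odot>\<^bsub>D\<^esub> a) | a. a \<in> H +>\<^bsub>D\<^esub> a0}"
      using a0 by blast
  qed
qed

locale pmodR =
  fixes R :: "'k ring" and M :: "('p::order,'k,'m) pmod"
  assumes cr: "cring R" and pm: "is_pmod R M"
begin

lemma modx: "module R (fst M x)" using pm unfolding is_pmod_def by auto
lemma agx: "abelian_group (fst M x)" using modx unfolding module_def by auto
lemma amx: "abelian_monoid (fst M x)" using agx abelian_group.axioms(1) by blast
lemma minus_zero_x: "\<ominus>\<^bsub>fst M x\<^esub> \<zero>\<^bsub>fst M x\<^esub> = \<zero>\<^bsub>fst M x\<^esub>"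
proof -
  interpret A: abelian_group "fst M x" by (rule agx)
  show ?thesis by (rule A.minus_equality) simp_all
qed
lemma linx: "x \<le> y \<Longrightarrow> linear_map R (fst M x) (fst M y) (snd M x y)"
  using pm unfolding is_pmod_def by auto
lemma mp_closed: "x \<le> y \<Longrightarrow> m \<in> carrier (fst M x) \<Longrightarrow> snd M x y m \<in> carrier (fst M y)"
  using linx[of x y] unfolding linear_map_def by auto
lemma mp_add: "x \<le> y \<Longrightarrow> m \<in> carrier (fst M x) \<Longrightarrow> n \<in> carrier (fst M x) \<Longrightarrow>
   snd M x y (m \<oplus>\<^bsub>fst M x\<^esub> n) = snd M x y m \<oplus>\<^bsub>fst M y\<^esub> snd M x y n"
  using linx[of x y] unfolding linear_map_def by auto
lemma mp_smult: "x \<le> y \<Longrightarrow> c \<in> carrier R \<Longrightarrow> m \<in> carrier (fst M x) \<Longrightarrow>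
   snd M x y (c \<odot>\<^bsub>fst M x\<^esub> m) = c \<odot>\<^bsub>fst M y\<^esub> snd M x y m"
  using linx[of x y] unfolding linear_map_def by auto
lemma mp_id: "m \<in> carrier (fst M x) \<Longrightarrow> snd M x x m = m"
  using pm unfolding is_pmod_def by auto
lemma mp_comp: "x \<le> y \<Longrightarrow> y \<le> z \<Longrightarrow> m \<in> carrier (fst M x) \<Longrightarrow> snd M y z (snd M x y m) = snd M x z m"
  using pm unfolding is_pmod_def by auto
lemma mp_zero: "x \<le> y \<Longrightarrow> snd M x y \<zero>\<^bsub>fst M x\<^esub> = \<zero>\<^bsub>fst M y\<^esub>"
  using lin_zero[OF linx[of x y] agx agx] by auto

lemma lower_interleaved:
  assumes mono: "mono (T e)" and inc: "\<And>p. p \<le> T e p" and tr: "\<And>x. x \<lless> T e x"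
  shows "interleaved R T e M (lower_pmod R M)"
proof -
  define t where "t = T e"
  have monot: "p \<le> q \<Longrightarrow> t p \<le> t q" for p q using mono unfolding t_def mono_def by auto
  have inct: "p \<le> t p" for p using inc unfolding t_def by auto
  have trt: "x \<lless> t x" for x using tr unfolding t_def by auto
  define f where "f = (\<lambda>p m x. if t p \<lless> x then snd M p x m else undefined)"
  define g where "g = (\<lambda>p (s::'p \<Rightarrow> 'm). s (t p))"
  have px: "t p \<lless> x \<Longrightarrow> p \<le> x" for p x using order_trans[OF inct wb_le] by blast
  have fcar: "f p m \<in> carrier (lim_module R M (t p))" if m: "m \<in> carrier (fst M p)" for p m
    unfolding lim_module_def f_def
  proof (simp, intro conjI allI impI)
    fix x assume "t p \<lless> x"
    then show "snd M p x m \<in> carrier (fst M x)" using m mp_closed px by blast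
  next
    fix x y assume a: "t p \<lless> x" "x \<le> y"
    then have "t p \<lless> y" using wb_trans_le by blast
    then show "snd M p y m = snd M x y (snd M p x m)" using a m mp_comp px by auto
  next
    fix x y assume "t p \<lless> x" "\<not> t p \<lless> y" "x \<le> y"
    then show "undefined = snd M x y (snd M p x m)" using wb_trans_le by blast
  qed
  have F: "is_pmorph R M (pullback t (lower_pmod R M)) f"
    unfolding is_pmorph_def pb_fst pb_snd lower_fst lower_snd
  proof (intro conjI allI impI ballI)
    fix p
    show "linear_map R (fst M p) (lim_module R M (t p)) (f p)"
      unfolding linear_map_def
    proof (intro conjI ballI Pi_I)
      fix m assume "m \<in> carrier (fst M p)" then show "f p m \<in> carrier (lim_module R M (t p))" by (rule fcar)
    next
      fix m n assume m: "m \<in> carrier (fst M p)" and n: "n \<in> carrier (fst M p)"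
      show "f p (m \<oplus>\<^bsub>fst M p\<^esub> n) = f p m \<oplus>\<^bsub>lim_module R M (t p)\<^esub> f p n"
        unfolding lim_add f_def by (rule ext) (simp add: mp_add[OF px m n])
    next
      fix c m assume c: "c \<in> carrier R" and m: "m \<in> carrier (fst M p)"
      show "f p (c \<odot>\<^bsub>fst M p\<^esub> m) = c \<odot>\<^bsub>lim_module R M (t p)\<^esub> f p m"
        unfolding lim_smult f_def by (rule ext) (simp add: mp_smult[OF px c m])
    qed
  next
    fix p q m assume pq: "p \<le> q" and m: "m \<in> carrier (fst M p)"
    have "(if t q \<lless> x then snd M q x (snd M p q m) else undefined) =
          (if t q \<lless> x then (if t p \<lless> x then snd M p x m else undefined) else undefined)" for x
    proof (cases "t q \<lless> x")
      case True
      then have "t p \<lless> x" using monot[OF pq] wb_le_trans by blast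
      moreover have "q \<le> x" using px True by blast
      ultimately show ?thesis using True mp_comp[OF pq _ m] by simp
    qed simp
    then show "f q (snd M p q m) = (\<lambda>x. if t q \<lless> x then f p m x else undefined)"
      unfolding f_def by (intro ext)
  qed
  have G: "is_pmorph R (lower_pmod R M) (pullback t M) g"
    unfolding is_pmorph_def pb_fst pb_snd lower_fst lower_snd
  proof (intro conjI allI impI ballI)
    fix p
    show "linear_map R (lim_module R M p) (fst M (t p)) (g p)"
      unfolding linear_map_def g_def
      by (auto simp: lim_add lim_smult trt intro: lim_car1[OF _ trt])
  next
    fix p q s assume pq: "p \<le> q" and s: "s \<in> carrier (lim_module R M p)"
    have "p \<lless> t q" using trt[of p] monot[OF pq] wb_trans_le by blast
    then show "g q (\<lambda>x. if q \<lless> x then s x else undefined) = snd M (t p) (t q) (g p s)"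
      unfolding g_def using lim_car2[OF s trt[of p] monot[OF pq]] trt[of q] by simp
  qed
  have I1: "g (t p) (f p m) = snd M p (t (t p)) m" for p m
    by (simp add: f_def g_def trt)
  have I2: "f (t p) (g p s) = snd (lower_pmod R M) p (t (t p)) s"
    if s: "s \<in> carrier (fst (lower_pmod R M) p)" for p s
  proof -
    have sc: "s y = snd M x y (s x)" if "p \<lless> x" "x \<le> y" for x y
      using s that unfolding lower_pmod_def lim_module_def fst_conv partial_object.simps mem_Collect_eq by blast
    have H: "(if t (t p) \<lless> x then snd M (t p) x (s (t p)) else undefined) = 
          (if t (t p) \<lless> x then s x else undefined)" for x
    proof (cases "t (t p) \<lless> x")
      case True
      then have "t p \<le> x" using px by blast
      then show ?thesis using True sc[OF trt[of p] \<open>t p \<le> x\<close>] by simp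
    next
      case False then show ?thesis by (simp only: if_False)
    qed
    show ?thesis unfolding f_def g_def lower_pmod_def snd_conv by (rule ext, rule H)
  qed
  show ?thesis unfolding interleaved_def t_def[symmetric]
    apply (rule exI[of _ f], rule exI[of _ g])
    using F G I1 I2 by simp
qed


lemma zero_interleaved:
  assumes eph: "ephemeral M"
    and mono: "mono (T e)" and inc: "\<And>p. p \<le> T e p" and tr: "\<And>x. x \<lless> T e x"
  shows "interleaved R T e M (zero_pmod :: ('p, 'k, unit) pmod)"
proof -
  define t where "t = T e"
  have monot: "p \<le> q \<Longrightarrow> t p \<le> t q" for p q using mono unfolding t_def mono_def by auto
  have inct: "p \<le> t p" for p using inc unfolding t_def by auto
  have trt: "x \<lless> t x" for x using tr unfolding t_def by auto
  define f where "f = (\<lambda>(p::'p) (m::'m). ())"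
  define g where "g = (\<lambda>p (y::unit). \<zero>\<^bsub>fst M (t p)\<^esub>)"
  have zf: "fst (zero_pmod :: ('p, 'k, unit) pmod) p = zero_module" for p unfolding zero_pmod_def by simp
  have F: "is_pmorph R M (pullback t (zero_pmod :: ('p, 'k, unit) pmod)) f"
    unfolding is_pmorph_def pb_fst pb_snd zf linear_map_def f_def
    by (simp add: zero_module_def)
  have G: "is_pmorph R (zero_pmod :: ('p, 'k, unit) pmod) (pullback t M) g"
    unfolding is_pmorph_def pb_fst pb_snd zf
  proof (intro conjI allI impI ballI)
    fix p
    interpret Mp: module R "fst M (t p)" by (rule modx)
    show "linear_map R zero_module (fst M (t p)) (g p)"
      unfolding linear_map_def g_def by (simp add: zero_module_def)
  next
    fix p q :: 'p and y :: unit assume pq: "p \<le> q"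
    show "g q (snd (zero_pmod :: ('p, 'k, unit) pmod) p q y) = snd M (t p) (t q) (g p y)"
      unfolding g_def using mp_zero[OF monot[OF pq]] by simp
  qed
  have I1: "g (t p) (f p m) = snd M p (t (t p)) m" if m: "m \<in> carrier (fst M p)" for p m
  proof -
    have "p \<lless> t (t p)" using wb_trans_le[OF trt inct] .
    then show ?thesis using eph m unfolding ephemeral_def g_def by auto
  qed
  have I2: "f (t p) (g p y) = snd zero_pmod p (t (t p)) y" for p y
    unfolding f_def zero_pmod_def by simp
  show ?thesis unfolding interleaved_def t_def[symmetric]
    apply (rule exI[of _ f], rule exI[of _ g])
    using F G I1 I2 by simp
qed


section \<open>direct sums\<close>

definition supp :: "'p \<Rightarrow> ('p \<Rightarrow> 'm) \<Rightarrow> 'p set" where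
  "supp q a = {x. x \<lless> q \<and> a x \<noteq> \<zero>\<^bsub>fst M x\<^esub>}"

lemma D_add: "s \<oplus>\<^bsub>dsum_module R M q\<^esub> u = (\<lambda>x. if x \<lless> q then s x \<oplus>\<^bsub>fst M x\<^esub> u x else undefined)"
  unfolding dsum_module_def by simp
lemma D_smult: "c \<odot>\<^bsub>dsum_module R M q\<^esub> u = (\<lambda>x. if x \<lless> q then c \<odot>\<^bsub>fst M x\<^esub> u x else undefined)"
  unfolding dsum_module_def by simp
lemma D_zero: "\<zero>\<^bsub>dsum_module R M q\<^esub> = (\<lambda>x. if x \<lless> q then \<zero>\<^bsub>fst M x\<^esub> else undefined)"
  unfolding dsum_module_def by simp
lemma D_car: "s \<in> carrier (dsum_module R M q) \<longleftrightarrow>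
   (\<forall>x. x \<lless> q \<longrightarrow> s x \<in> carrier (fst M x)) \<and> (\<forall>x. \<not> x \<lless> q \<longrightarrow> s x = undefined) \<and> finite (supp q s)"
  unfolding dsum_module_def supp_def by simp

lemma D_eqI: "(\<And>x. x \<lless> q \<Longrightarrow> s x = u x) \<Longrightarrow> (\<And>x. \<not> x \<lless> q \<Longrightarrow> s x = undefined) \<Longrightarrow>
   (\<And>x. \<not> x \<lless> q \<Longrightarrow> u x = undefined) \<Longrightarrow> s = u"
  by (rule ext) metis

lemma D_abelian: "abelian_group (dsum_module R M q)"
proof (rule abelian_groupI)
  fix s u assume s: "s \<in> carrier (dsum_module R M q)" and u: "u \<in> carrier (dsum_module R M q)"
  have "supp q (s \<oplus>\<^bsub>dsum_module R M q\<^esub> u) \<subseteq> supp q s \<union> supp q u"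
    unfolding supp_def D_add using abelian_monoid.l_zero[OF amx] abelian_monoid.zero_closed[OF amx] by auto
  then show "s \<oplus>\<^bsub>dsum_module R M q\<^esub> u \<in> carrier (dsum_module R M q)"
    using s u unfolding D_car by (auto simp: D_add abelian_monoid.a_closed[OF amx] intro: rev_finite_subset)
  show "s \<oplus>\<^bsub>dsum_module R M q\<^esub> u = u \<oplus>\<^bsub>dsum_module R M q\<^esub> s"
    using s u unfolding D_car D_add by (intro ext) (simp add: abelian_monoid.a_comm[OF amx])
next
  show "\<zero>\<^bsub>dsum_module R M q\<^esub> \<in> carrier (dsum_module R M q)"
    unfolding D_car D_zero supp_def by (simp add: abelian_monoid.zero_closed[OF amx])
next
  fix s u v assume s: "s \<in> carrier (dsum_module R M q)" and u: "u \<in> carrier (dsum_module R M q)"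
    and v: "v \<in> carrier (dsum_module R M q)"
  show "s \<oplus>\<^bsub>dsum_module R M q\<^esub> u \<oplus>\<^bsub>dsum_module R M q\<^esub> v = s \<oplus>\<^bsub>dsum_module R M q\<^esub> (u \<oplus>\<^bsub>dsum_module R M q\<^esub> v)"
    using s u v unfolding D_car D_add by (intro ext) (simp add: abelian_monoid.a_assoc[OF amx])
next
  fix s assume s: "s \<in> carrier (dsum_module R M q)"
  show "\<zero>\<^bsub>dsum_module R M q\<^esub> \<oplus>\<^bsub>dsum_module R M q\<^esub> s = s"
    using s unfolding D_car D_add D_zero by (intro ext) (simp add: abelian_monoid.l_zero[OF amx])
  define y where "y = (\<lambda>x. if x \<lless> q then \<ominus>\<^bsub>fst M x\<^esub> s x else undefined)"
  have "supp q y \<subseteq> supp q s"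
    unfolding supp_def y_def using abelian_group.minus_minus[OF agx] abelian_monoid.zero_closed[OF amx]
    by (auto simp: minus_zero_x)
  then have "y \<in> carrier (dsum_module R M q)"
    using s unfolding D_car y_def by (auto simp: abelian_group.a_inv_closed[OF agx] intro: rev_finite_subset)
  moreover have "y \<oplus>\<^bsub>dsum_module R M q\<^esub> s = \<zero>\<^bsub>dsum_module R M q\<^esub>"
    using s unfolding D_car D_add D_zero y_def by (intro ext) (simp add: abelian_group.l_neg[OF agx])
  ultimately show "\<exists>y\<in>carrier (dsum_module R M q). y \<oplus>\<^bsub>dsum_module R M q\<^esub> s = \<zero>\<^bsub>dsum_module R M q\<^esub>" by blast
qed

lemma D_module: "module R (dsum_module R M q)"
proof (rule moduleI[OF cr D_abelian])
  fix c s assume c: "c \<in> carrier R" and s: "s \<in> carrier (dsum_module R M q)"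
  have "supp q (c \<odot>\<^bsub>dsum_module R M q\<^esub> s) \<subseteq> supp q s"
    unfolding supp_def D_smult using module.smult_r_null[OF modx c] by auto
  then show "c \<odot>\<^bsub>dsum_module R M q\<^esub> s \<in> carrier (dsum_module R M q)"
    using s c unfolding D_car by (auto simp: D_smult module.smult_closed[OF modx] intro: rev_finite_subset)
next
  fix a b s assume a: "a \<in> carrier R" and b: "b \<in> carrier R" and s: "s \<in> carrier (dsum_module R M q)"
  show "(a \<oplus>\<^bsub>R\<^esub> b) \<odot>\<^bsub>dsum_module R M q\<^esub> s = a \<odot>\<^bsub>dsum_module R M q\<^esub> s \<oplus>\<^bsub>dsum_module R M q\<^esub> b \<odot>\<^bsub>dsum_module R M q\<^esub> s"
    using a b s unfolding D_car D_add D_smult by (intro ext) (simp add: module.smult_l_distr[OF modx])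
  show "(a \<otimes>\<^bsub>R\<^esub> b) \<odot>\<^bsub>dsum_module R M q\<^esub> s = a \<odot>\<^bsub>dsum_module R M q\<^esub> (b \<odot>\<^bsub>dsum_module R M q\<^esub> s)"
    using a b s unfolding D_car D_add D_smult by (intro ext) (simp add: module.smult_assoc1[OF modx])
next
  fix a s u assume a: "a \<in> carrier R" and s: "s \<in> carrier (dsum_module R M q)" and u: "u \<in> carrier (dsum_module R M q)"
  show "a \<odot>\<^bsub>dsum_module R M q\<^esub> (s \<oplus>\<^bsub>dsum_module R M q\<^esub> u) = a \<odot>\<^bsub>dsum_module R M q\<^esub> s \<oplus>\<^bsub>dsum_module R M q\<^esub> a \<odot>\<^bsub>dsum_module R M q\<^esub> u"
    using a s u unfolding D_car D_add D_smult by (intro ext) (simp add: module.smult_r_distr[OF modx])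
next
  fix s assume s: "s \<in> carrier (dsum_module R M q)"
  show "\<one>\<^bsub>R\<^esub> \<odot>\<^bsub>dsum_module R M q\<^esub> s = s"
    using s unfolding D_car D_smult by (intro ext) (simp add: module.smult_one[OF modx])
qed

lemma inc_car: "x \<lless> q \<Longrightarrow> m \<in> carrier (fst M x) \<Longrightarrow> dsum_incl M q x m \<in> carrier (dsum_module R M q)"
proof -
  assume x: "x \<lless> q" and m: "m \<in> carrier (fst M x)"
  have "supp q (dsum_incl M q x m) \<subseteq> {x}" unfolding supp_def dsum_incl_def by auto
  then show ?thesis using x m unfolding D_car dsum_incl_def
    by (auto simp: abelian_monoid.zero_closed[OF amx] intro: rev_finite_subset)
qed

lemma inc_add: "x \<lless> q \<Longrightarrow> m \<in> carrier (fst M x) \<Longrightarrow> n \<in> carrier (fst M x) \<Longrightarrow>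
  dsum_incl M q x (m \<oplus>\<^bsub>fst M x\<^esub> n) = dsum_incl M q x m \<oplus>\<^bsub>dsum_module R M q\<^esub> dsum_incl M q x n"
  unfolding D_add dsum_incl_def
  by (intro ext) (auto simp: abelian_monoid.l_zero[OF amx] abelian_monoid.zero_closed[OF amx])

lemma inc_smult: "x \<lless> q \<Longrightarrow> c \<in> carrier R \<Longrightarrow> m \<in> carrier (fst M x) \<Longrightarrow>
  dsum_incl M q x (c \<odot>\<^bsub>fst M x\<^esub> m) = c \<odot>\<^bsub>dsum_module R M q\<^esub> dsum_incl M q x m"
  unfolding D_smult dsum_incl_def
  by (intro ext) (auto simp: module.smult_r_null[OF modx])

lemma inc_additive: "x \<lless> q \<Longrightarrow> additive (fst M x) (dsum_module R M q) (dsum_incl M q x)"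
  unfolding additive_def using inc_car inc_add by auto

lemma dsum_induct:
  assumes a: "a \<in> carrier (dsum_module R M q)"
    and P0: "P \<zero>\<^bsub>dsum_module R M q\<^esub>"
    and Ps: "\<And>x m a. x \<lless> q \<Longrightarrow> m \<in> carrier (fst M x) \<Longrightarrow> a \<in> carrier (dsum_module R M q) \<Longrightarrow> P a
              \<Longrightarrow> P (dsum_incl M q x m \<oplus>\<^bsub>dsum_module R M q\<^esub> a)"
  shows "P a"
proof -
  have "\<And>a. a \<in> carrier (dsum_module R M q) \<Longrightarrow> card (supp q a) = n \<Longrightarrow> P a" for n
  proof (induct n)
    case 0
    then have fin: "finite (supp q a)" unfolding D_car by blast
    with 0 have "supp q a = {}" by simp
    then have "a = \<zero>\<^bsub>dsum_module R M q\<^esub>"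
      using 0(1) unfolding D_car D_zero supp_def by (intro ext) auto
    then show ?case using P0 by simp
  next
    case (Suc n)
    then have fin: "finite (supp q a)" unfolding D_car by blast
    with Suc have "supp q a \<noteq> {}" by auto
    then obtain x where x: "x \<in> supp q a" by blast
    then have xq: "x \<lless> q" unfolding supp_def by simp
    have ax: "a x \<in> carrier (fst M x)" using Suc(2) xq unfolding D_car by blast
    define a' where "a' = a(x := \<zero>\<^bsub>fst M x\<^esub>)"
    have sa': "supp q a' = supp q a - {x}" unfolding supp_def a'_def by auto
    have a': "a' \<in> carrier (dsum_module R M q)"
      using Suc(2) xq sa' fin unfolding D_car a'_def
      by (auto simp: abelian_monoid.zero_closed[OF amx])
    have "card (supp q a') = n" using sa' Suc(3) fin x by simp
    then have "P a'" using Suc(1) a' by blast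
    moreover have "a = dsum_incl M q x (a x) \<oplus>\<^bsub>dsum_module R M q\<^esub> a'"
      using Suc(2) xq ax unfolding D_car D_add dsum_incl_def a'_def
      by (intro ext) (auto simp: abelian_monoid.l_zero[OF amx] abelian_monoid.r_zero[OF amx])
    ultimately show ?case using Ps[OF xq ax a'] by simp
  qed
  then show ?thesis using a by blast
qed

lemma additive_agree:
  assumes f: "additive (dsum_module R M q) B f" and h: "additive (dsum_module R M q) B h"
    and B: "abelian_group B"
    and fh: "\<And>x m. x \<lless> q \<Longrightarrow> m \<in> carrier (fst M x) \<Longrightarrow> f (dsum_incl M q x m) = h (dsum_incl M q x m)"
    and a: "a \<in> carrier (dsum_module R M q)"
  shows "f a = h a"
  using a
proof (rule dsum_induct)
  show "f \<zero>\<^bsub>dsum_module R M q\<^esub> = h \<zero>\<^bsub>dsum_module R M q\<^esub>"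
    using additive_zero[OF f D_abelian B] additive_zero[OF h D_abelian B] by simp
next
  fix x m a assume x: "x \<lless> q" and m: "m \<in> carrier (fst M x)" and a: "a \<in> carrier (dsum_module R M q)"
    and IH: "f a = h a"
  show "f (dsum_incl M q x m \<oplus>\<^bsub>dsum_module R M q\<^esub> a) = h (dsum_incl M q x m \<oplus>\<^bsub>dsum_module R M q\<^esub> a)"
    using f h inc_car[OF x m] a IH fh[OF x m] unfolding additive_def by simp
qed

lemma additive_into:
  assumes f: "additive (dsum_module R M q) B f" and B: "abelian_group B"
    and H0: "\<zero>\<^bsub>B\<^esub> \<in> H" and Hadd: "\<And>u v. u \<in> H \<Longrightarrow> v \<in> H \<Longrightarrow> u \<oplus>\<^bsub>B\<^esub> v \<in> H"
    and fi: "\<And>x m. x \<lless> q \<Longrightarrow> m \<in> carrier (fst M x) \<Longrightarrow> f (dsum_incl M q x m) \<in> H"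
    and a: "a \<in> carrier (dsum_module R M q)"
  shows "f a \<in> H"
  using a
proof (rule dsum_induct)
  show "f \<zero>\<^bsub>dsum_module R M q\<^esub> \<in> H"
    using additive_zero[OF f D_abelian B] H0 by simp
next
  fix x m a assume x: "x \<lless> q" and m: "m \<in> carrier (fst M x)" and a: "a \<in> carrier (dsum_module R M q)"
    and IH: "f a \<in> H"
  show "f (dsum_incl M q x m \<oplus>\<^bsub>dsum_module R M q\<^esub> a) \<in> H"
    using f inc_car[OF x m] a IH fi[OF x m] Hadd unfolding additive_def by simp
qed



end


context pmodR begin

definition Phi :: "'p \<Rightarrow> 'p \<Rightarrow> ('p \<Rightarrow> 'm) \<Rightarrow> 'm" where
  "Phi q r a = finsum (fst M r) (\<lambda>x. snd M x r (a x)) (supp q a)"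

lemma wq: "x \<lless> q \<Longrightarrow> q \<le> r \<Longrightarrow> x \<le> r" using wb_le order_trans by blast

lemma mpc: "x \<lless> q \<Longrightarrow> q \<le> r \<Longrightarrow> m \<in> carrier (fst M x) \<Longrightarrow> snd M x r m \<in> carrier (fst M r)"
  using mp_closed wq by blast
lemma mpz: "x \<lless> q \<Longrightarrow> q \<le> r \<Longrightarrow> snd M x r \<zero>\<^bsub>fst M x\<^esub> = \<zero>\<^bsub>fst M r\<^esub>"
  using mp_zero wq by blast

lemma supp_fin: "a \<in> carrier (dsum_module R M q) \<Longrightarrow> finite (supp q a)"
  unfolding D_car by blast

lemma Phi_F:
  assumes qr: "q \<le> r" and a: "a \<in> carrier (dsum_module R M q)" and F: "finite F" "supp q a \<subseteq> F" "F \<subseteq> {x. x \<lless> q}"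
  shows "Phi q r a = finsum (fst M r) (\<lambda>x. snd M x r (a x)) F"
proof -
  interpret A: abelian_group "fst M r" by (rule agx)
  have ac: "x \<lless> q \<Longrightarrow> a x \<in> carrier (fst M x)" for x using a unfolding D_car by blast
  show ?thesis unfolding Phi_def
  proof (rule A.add.finprod_mono_neutral_cong_right[symmetric])
    show "finite F" by fact
    show "supp q a \<subseteq> F" by fact
    fix i assume "i \<in> F - supp q a"
    then have "i \<lless> q" "a i = \<zero>\<^bsub>fst M i\<^esub>" using F unfolding supp_def by auto
    then show "snd M i r (a i) = \<zero>\<^bsub>fst M r\<^esub>" using mpz qr by simp
  next
    show "(\<lambda>x. snd M x r (a x)) \<in> F \<rightarrow> carrier (fst M r)"
      using F(3) ac mpc qr by blast
  qed simp
qed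

lemma Phi_closed: "q \<le> r \<Longrightarrow> a \<in> carrier (dsum_module R M q) \<Longrightarrow> Phi q r a \<in> carrier (fst M r)"
proof -
  assume qr: "q \<le> r" and a: "a \<in> carrier (dsum_module R M q)"
  interpret A: abelian_group "fst M r" by (rule agx)
  have ac: "x \<lless> q \<Longrightarrow> a x \<in> carrier (fst M x)" for x using a unfolding D_car by blast
  show ?thesis unfolding Phi_def
    by (rule A.finsum_closed) (use ac mpc qr in \<open>auto simp: supp_def\<close>)
qed

lemma Phi_add:
  assumes qr: "q \<le> r" and a: "a \<in> carrier (dsum_module R M q)" and b: "b \<in> carrier (dsum_module R M q)"
  shows "Phi q r (a \<oplus>\<^bsub>dsum_module R M q\<^esub> b) = Phi q r a \<oplus>\<^bsub>fst M r\<^esub> Phi q r b"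
proof -
  interpret A: abelian_group "fst M r" by (rule agx)
  interpret Dq: module R "dsum_module R M q" by (rule D_module)
  let ?F = "supp q a \<union> supp q b"
  have fin: "finite ?F" using supp_fin a b by blast
  have Fq: "?F \<subseteq> {x. x \<lless> q}" unfolding supp_def by auto
  have ac: "x \<lless> q \<Longrightarrow> a x \<in> carrier (fst M x)" for x using a unfolding D_car by blast
  have bc: "x \<lless> q \<Longrightarrow> b x \<in> carrier (fst M x)" for x using b unfolding D_car by blast
  have ab: "a \<oplus>\<^bsub>dsum_module R M q\<^esub> b \<in> carrier (dsum_module R M q)" using a b by simp
  have sab: "supp q (a \<oplus>\<^bsub>dsum_module R M q\<^esub> b) \<subseteq> ?F"
    unfolding supp_def D_add using abelian_monoid.l_zero[OF amx] abelian_monoid.zero_closed[OF amx] by auto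
  have "Phi q r (a \<oplus>\<^bsub>dsum_module R M q\<^esub> b) = finsum (fst M r) (\<lambda>x. snd M x r ((a \<oplus>\<^bsub>dsum_module R M q\<^esub> b) x)) ?F"
    by (rule Phi_F[OF qr ab fin sab Fq])
  also have "\<dots> = finsum (fst M r) (\<lambda>x. snd M x r (a x) \<oplus>\<^bsub>fst M r\<^esub> snd M x r (b x)) ?F"
  proof (rule A.finsum_cong')
    show "(\<lambda>x. snd M x r (a x) \<oplus>\<^bsub>fst M r\<^esub> snd M x r (b x)) \<in> ?F \<rightarrow> carrier (fst M r)"
      using Fq ac bc mpc qr by (auto intro!: A.a_closed)
    fix x assume "x \<in> ?F"
    then have x: "x \<lless> q" using Fq by blast
    show "snd M x r ((a \<oplus>\<^bsub>dsum_module R M q\<^esub> b) x) = snd M x r (a x) \<oplus>\<^bsub>fst M r\<^esub> snd M x r (b x)"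
      unfolding D_add using x mp_add[OF wq[OF x qr] ac[OF x] bc[OF x]] by simp
  qed simp
  also have "\<dots> = finsum (fst M r) (\<lambda>x. snd M x r (a x)) ?F \<oplus>\<^bsub>fst M r\<^esub> finsum (fst M r) (\<lambda>x. snd M x r (b x)) ?F"
    by (rule A.finsum_addf) (use Fq ac bc mpc qr in auto)
  also have "\<dots> = Phi q r a \<oplus>\<^bsub>fst M r\<^esub> Phi q r b"
    using Phi_F[OF qr a fin _ Fq] Phi_F[OF qr b fin _ Fq] by simp
  finally show ?thesis .
qed

lemma Phi_additive: "q \<le> r \<Longrightarrow> additive (dsum_module R M q) (fst M r) (Phi q r)"
  unfolding additive_def using Phi_closed Phi_add by auto

lemma Phi_inc:
  assumes x: "x \<lless> q" and qr: "q \<le> r" and m: "m \<in> carrier (fst M x)"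
  shows "Phi q r (dsum_incl M q x m) = snd M x r m"
proof -
  interpret A: abelian_group "fst M r" by (rule agx)
  have "supp q (dsum_incl M q x m) \<subseteq> {x}" unfolding supp_def dsum_incl_def by auto
  then have "Phi q r (dsum_incl M q x m) = finsum (fst M r) (\<lambda>y. snd M y r (dsum_incl M q x m y)) {x}"
    using Phi_F[OF qr inc_car[OF x m]] x by simp
  also have "\<dots> = snd M x r (dsum_incl M q x m x)"
    using mpc[OF x qr m] by (simp add: dsum_incl_def)
  also have "\<dots> = snd M x r m" by (simp add: dsum_incl_def)
  finally show ?thesis .
qed

lemma Phi_smult:
  assumes qr: "q \<le> r" and c: "c \<in> carrier R" and a: "a \<in> carrier (dsum_module R M q)"
  shows "Phi q r (c \<odot>\<^bsub>dsum_module R M q\<^esub> a) = c \<odot>\<^bsub>fst M r\<^esub> Phi q r a"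
proof -
  interpret Dq: module R "dsum_module R M q" by (rule D_module)
  interpret Mr: module R "fst M r" by (rule modx)
  show ?thesis
  proof (rule additive_agree[OF _ _ agx _ a])
    show "additive (dsum_module R M q) (fst M r) (\<lambda>a. Phi q r (c \<odot>\<^bsub>dsum_module R M q\<^esub> a))"
      unfolding additive_def using c by (auto simp: Phi_closed[OF qr] Phi_add[OF qr] Dq.smult_r_distr)
    show "additive (dsum_module R M q) (fst M r) (\<lambda>a. c \<odot>\<^bsub>fst M r\<^esub> Phi q r a)"
      unfolding additive_def using c by (auto simp: Phi_closed[OF qr] Phi_add[OF qr] Mr.smult_r_distr)
    fix x m assume x: "x \<lless> q" and m: "m \<in> carrier (fst M x)"
    have cm: "c \<odot>\<^bsub>fst M x\<^esub> m \<in> carrier (fst M x)" using module.smult_closed[OF modx c m] .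
    show "Phi q r (c \<odot>\<^bsub>dsum_module R M q\<^esub> dsum_incl M q x m) = c \<odot>\<^bsub>fst M r\<^esub> Phi q r (dsum_incl M q x m)"
      using inc_smult[OF x c m, symmetric] Phi_inc[OF x qr cm] Phi_inc[OF x qr m] mp_smult[OF wq[OF x qr] c m]
      by simp
  qed
qed

definition gens :: "'p \<Rightarrow> ('p \<Rightarrow> 'm) set" where
  "gens q = {dsum_incl M q x m \<ominus>\<^bsub>dsum_module R M q\<^esub> dsum_incl M q y (snd M x y m) | x y m.
             x \<lless> q \<and> y \<lless> q \<and> x \<le> y \<and> m \<in> carrier (fst M x)}"

lemma K_def': "colim_relations R M q = \<Inter>{H. submodule H R (dsum_module R M q) \<and> gens q \<subseteq> H}"
  unfolding colim_relations_def gens_def ..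

lemma gens_car: "gens q \<subseteq> carrier (dsum_module R M q)"
proof -
  interpret Dq: module R "dsum_module R M q" by (rule D_module)
  show ?thesis unfolding gens_def using inc_car mp_closed by (auto intro!: Dq.minus_closed)
qed

lemma K_min: "submodule H R (dsum_module R M q) \<Longrightarrow> gens q \<subseteq> H \<Longrightarrow> colim_relations R M q \<subseteq> H"
  unfolding K_def' by blast

lemma K_gen: "x \<lless> q \<Longrightarrow> y \<lless> q \<Longrightarrow> x \<le> y \<Longrightarrow> m \<in> carrier (fst M x) \<Longrightarrow>
  dsum_incl M q x m \<ominus>\<^bsub>dsum_module R M q\<^esub> dsum_incl M q y (snd M x y m) \<in> colim_relations R M q"
  unfolding K_def' gens_def by blast

lemma K_sub: "submodule (colim_relations R M q) R (dsum_module R M q)"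
proof -
  interpret Dq: module R "dsum_module R M q" by (rule D_module)
  let ?Fam = "{H. submodule H R (dsum_module R M q) \<and> gens q \<subseteq> H}"
  have sm: "\<And>H. H \<in> ?Fam \<Longrightarrow> submodule H R (dsum_module R M q)" by blast
  show ?thesis unfolding K_def'
  proof (rule Dq.submoduleI)
    show "\<Inter>?Fam \<subseteq> carrier (dsum_module R M q)"
      using Dq.carrier_is_submodule gens_car by blast
    show "\<zero>\<^bsub>dsum_module R M q\<^esub> \<in> \<Inter>?Fam"
    proof (rule InterI)
      fix H assume "H \<in> ?Fam"
      then show "\<zero>\<^bsub>dsum_module R M q\<^esub> \<in> H"
        using subgroup.one_closed[OF submodule.axioms(1)[OF sm]] by simp
    qed
    show "\<ominus>\<^bsub>dsum_module R M q\<^esub> a \<in> \<Inter>?Fam" if "a \<in> \<Inter>?Fam" for a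
      using that Dq.submoduleE(3)[OF sm] by blast
    show "a \<oplus>\<^bsub>dsum_module R M q\<^esub> b \<in> \<Inter>?Fam" if "a \<in> \<Inter>?Fam" "b \<in> \<Inter>?Fam" for a b
      using that Dq.submoduleE(5)[OF sm] by blast
    show "c \<odot>\<^bsub>dsum_module R M q\<^esub> a \<in> \<Inter>?Fam" if "c \<in> carrier R" "a \<in> \<Inter>?Fam" for c a
      using that Dq.submoduleE(4)[OF sm] by blast
  qed
qed

lemma K_car: "colim_relations R M q \<subseteq> carrier (dsum_module R M q)"
  using module.submoduleE(1)[OF D_module K_sub] .

lemma Phi_K:
  assumes qr: "q \<le> r" and k: "k \<in> colim_relations R M q"
  shows "Phi q r k = \<zero>\<^bsub>fst M r\<^esub>"
proof -
  interpret Dq: module R "dsum_module R M q" by (rule D_module)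
  interpret Mr: module R "fst M r" by (rule modx)
  let ?H = "{a \<in> carrier (dsum_module R M q). Phi q r a = \<zero>\<^bsub>fst M r\<^esub>}"
  have "submodule ?H R (dsum_module R M q)"
  proof (rule Dq.submoduleI)
    show "?H \<subseteq> carrier (dsum_module R M q)" by blast
    show "\<zero>\<^bsub>dsum_module R M q\<^esub> \<in> ?H"
      using additive_zero[OF Phi_additive[OF qr] D_abelian agx] by simp
    show "\<ominus>\<^bsub>dsum_module R M q\<^esub> a \<in> ?H" if "a \<in> ?H" for a
      using that additive_inv[OF Phi_additive[OF qr] D_abelian agx] by simp
    show "a \<oplus>\<^bsub>dsum_module R M q\<^esub> b \<in> ?H" if "a \<in> ?H" "b \<in> ?H" for a b
      using that Phi_add[OF qr] by simp
    show "c \<odot>\<^bsub>dsum_module R M q\<^esub> a \<in> ?H" if "c \<in> carrier R" "a \<in> ?H" for c a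
      using that Phi_smult[OF qr] by simp
  qed
  moreover have "gens q \<subseteq> ?H"
  proof
    fix g assume "g \<in> gens q"
    then obtain x y m where g: "g = dsum_incl M q x m \<ominus>\<^bsub>dsum_module R M q\<^esub> dsum_incl M q y (snd M x y m)"
      and x: "x \<lless> q" and y: "y \<lless> q" and xy: "x \<le> y" and m: "m \<in> carrier (fst M x)"
      unfolding gens_def by blast
    have ym: "snd M x y m \<in> carrier (fst M y)" using mp_closed[OF xy m] .
    have "Phi q r g = snd M x r m \<ominus>\<^bsub>fst M r\<^esub> snd M y r (snd M x y m)"
      unfolding g using additive_minus[OF Phi_additive[OF qr] D_abelian agx inc_car[OF x m] inc_car[OF y ym]]
        Phi_inc[OF x qr m] Phi_inc[OF y qr ym] by simp
    also have "\<dots> = \<zero>\<^bsub>fst M r\<^esub>"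
      using mp_comp[OF xy wq[OF y qr] m] mpc[OF x qr m] by (simp add: Mr.r_neg a_minus_def)
    finally show "g \<in> ?H" using gens_car \<open>g \<in> gens q\<close> by blast
  qed
  ultimately have "colim_relations R M q \<subseteq> ?H" by (rule K_min)
  then show ?thesis using k by blast
qed

section \<open>extension, colimit\<close>

definition extd :: "'p \<Rightarrow> 'p \<Rightarrow> ('p \<Rightarrow> 'm) \<Rightarrow> ('p \<Rightarrow> 'm)" where
  "extd p q a = (\<lambda>x. if x \<lless> p then a x else if x \<lless> q then \<zero>\<^bsub>fst M x\<^esub> else undefined)"

lemma colim_map': "colim_map R M p q A = \<Union>{colim_relations R M q +>\<^bsub>dsum_module R M q\<^esub> extd p q a | a. a \<in> A}"
  unfolding colim_map_def extd_def ..

lemma ext_car: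
  assumes pq: "p \<le> q" and a: "a \<in> carrier (dsum_module R M p)"
  shows "extd p q a \<in> carrier (dsum_module R M q)"
proof -
  have sub: "supp q (extd p q a) \<subseteq> supp p a" unfolding supp_def extd_def by auto
  have "x \<lless> p \<Longrightarrow> x \<lless> q" for x using wb_trans_le pq by blast
  then show ?thesis using a sub unfolding D_car extd_def
    by (auto simp: abelian_monoid.zero_closed[OF amx] intro: rev_finite_subset)
qed

lemma ext_add:
  assumes pq: "p \<le> q" and a: "a \<in> carrier (dsum_module R M p)" and b: "b \<in> carrier (dsum_module R M p)"
  shows "extd p q (a \<oplus>\<^bsub>dsum_module R M p\<^esub> b) = extd p q a \<oplus>\<^bsub>dsum_module R M q\<^esub> extd p q b"
proof -
  have "x \<lless> p \<Longrightarrow> x \<lless> q" for x using wb_trans_le pq by blast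
  then show ?thesis unfolding extd_def D_add
    by (intro ext) (auto simp: abelian_monoid.l_zero[OF amx] abelian_monoid.zero_closed[OF amx])
qed

lemma ext_smult:
  assumes pq: "p \<le> q" and c: "c \<in> carrier R"
  shows "extd p q (c \<odot>\<^bsub>dsum_module R M p\<^esub> b) = c \<odot>\<^bsub>dsum_module R M q\<^esub> extd p q b"
proof -
  have "x \<lless> p \<Longrightarrow> x \<lless> q" for x using wb_trans_le pq by blast
  then show ?thesis unfolding extd_def D_smult
    by (intro ext) (auto simp: module.smult_r_null[OF modx c])
qed

lemma ext_inc:
  assumes pq: "p \<le> q" and x: "x \<lless> p"
  shows "extd p q (dsum_incl M p x m) = dsum_incl M q x m"
proof -
  have "y \<lless> p \<Longrightarrow> y \<lless> q" for y using wb_trans_le pq by blast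
  then show ?thesis using x unfolding extd_def dsum_incl_def by (intro ext) auto
qed

lemma ext_additive: "p \<le> q \<Longrightarrow> additive (dsum_module R M p) (dsum_module R M q) (extd p q)"
  unfolding additive_def using ext_car ext_add by auto

lemma ext_K:
  assumes pq: "p \<le> q" and k: "k \<in> colim_relations R M p"
  shows "extd p q k \<in> colim_relations R M q"
proof -
  interpret Dp: module R "dsum_module R M p" by (rule D_module)
  interpret Dq: module R "dsum_module R M q" by (rule D_module)
  let ?H = "{a \<in> carrier (dsum_module R M p). extd p q a \<in> colim_relations R M q}"
  note Ks = Dq.submoduleE[OF K_sub]
  have "submodule ?H R (dsum_module R M p)"
  proof (rule Dp.submoduleI)
    show "?H \<subseteq> carrier (dsum_module R M p)" by blast
    show "\<zero>\<^bsub>dsum_module R M p\<^esub> \<in> ?H"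
      using additive_zero[OF ext_additive[OF pq] D_abelian D_abelian]
        subgroup.one_closed[OF submodule.axioms(1)[OF K_sub]] by simp
    show "\<ominus>\<^bsub>dsum_module R M p\<^esub> a \<in> ?H" if "a \<in> ?H" for a
      using that additive_inv[OF ext_additive[OF pq] D_abelian D_abelian] Ks(3) by simp
    show "a \<oplus>\<^bsub>dsum_module R M p\<^esub> b \<in> ?H" if "a \<in> ?H" "b \<in> ?H" for a b
      using that ext_add[OF pq] Ks(5) by simp
    show "c \<odot>\<^bsub>dsum_module R M p\<^esub> a \<in> ?H" if "c \<in> carrier R" "a \<in> ?H" for c a
      using that ext_smult[OF pq] Ks(4) by simp
  qed
  moreover have "gens p \<subseteq> ?H"
  proof
    fix g assume "g \<in> gens p"
    then obtain x y m where g: "g = dsum_incl M p x m \<ominus>\<^bsub>dsum_module R M p\<^esub> dsum_incl M p y (snd M x y m)"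
      and x: "x \<lless> p" and y: "y \<lless> p" and xy: "x \<le> y" and m: "m \<in> carrier (fst M x)"
      unfolding gens_def by blast
    have ym: "snd M x y m \<in> carrier (fst M y)" using mp_closed[OF xy m] .
    have xq: "x \<lless> q" and yq: "y \<lless> q" using x y wb_trans_le pq by blast+
    have "extd p q g = dsum_incl M q x m \<ominus>\<^bsub>dsum_module R M q\<^esub> dsum_incl M q y (snd M x y m)"
      unfolding g using additive_minus[OF ext_additive[OF pq] D_abelian D_abelian inc_car[OF x m] inc_car[OF y ym]]
        ext_inc[OF pq x] ext_inc[OF pq y] by simp
    then show "g \<in> ?H" using K_gen[OF xq yq xy m] gens_car \<open>g \<in> gens p\<close> by auto
  qed
  ultimately have "colim_relations R M p \<subseteq> ?H" by (rule K_min)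
  then show ?thesis using k by blast
qed

lemma colim_car: "carrier (colim_module R M q) =
   {colim_relations R M q +>\<^bsub>dsum_module R M q\<^esub> a | a. a \<in> carrier (dsum_module R M q)}"
  unfolding colim_module_def Let_def by simp

lemma colim_add_cos:
  assumes "a \<in> carrier (dsum_module R M q)" "b \<in> carrier (dsum_module R M q)"
  shows "(colim_relations R M q +>\<^bsub>dsum_module R M q\<^esub> a) \<oplus>\<^bsub>colim_module R M q\<^esub> (colim_relations R M q +>\<^bsub>dsum_module R M q\<^esub> b)
       = colim_relations R M q +>\<^bsub>dsum_module R M q\<^esub> (a \<oplus>\<^bsub>dsum_module R M q\<^esub> b)"
  unfolding colim_module_def Let_def using cos_add[OF D_module K_sub assms] by simp

lemma colim_smult_cos:
  assumes "a \<in> carrier (dsum_module R M q)" "c \<in> carrier R"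
  shows "c \<odot>\<^bsub>colim_module R M q\<^esub> (colim_relations R M q +>\<^bsub>dsum_module R M q\<^esub> a)
       = colim_relations R M q +>\<^bsub>dsum_module R M q\<^esub> (c \<odot>\<^bsub>dsum_module R M q\<^esub> a)"
  unfolding colim_module_def Let_def using cos_smult[OF D_module K_sub assms] by simp

lemma colim_map_cos:
  assumes pq: "p \<le> q" and a: "a \<in> carrier (dsum_module R M p)"
  shows "colim_map R M p q (colim_relations R M p +>\<^bsub>dsum_module R M p\<^esub> a)
       = colim_relations R M q +>\<^bsub>dsum_module R M q\<^esub> extd p q a"
  unfolding colim_map'
proof (rule Union_eqI')
  interpret Dp: module R "dsum_module R M p" by (rule D_module)
  interpret Dq: module R "dsum_module R M q" by (rule D_module)
  fix A assume "A \<in> {colim_relations R M q +>\<^bsub>dsum_module R M q\<^esub> extd p q b |b. b \<in> colim_relations R M p +>\<^bsub>dsum_module R M p\<^esub> a}"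
  then obtain b where A: "A = colim_relations R M q +>\<^bsub>dsum_module R M q\<^esub> extd p q b"
    and b: "b \<in> colim_relations R M p +>\<^bsub>dsum_module R M p\<^esub> a" by blast
  obtain k where k: "k \<in> colim_relations R M p" "b = k \<oplus>\<^bsub>dsum_module R M p\<^esub> a" using cos_elem[OF b] by blast
  have kc: "k \<in> carrier (dsum_module R M p)" using k K_car by blast
  have "extd p q b = extd p q k \<oplus>\<^bsub>dsum_module R M q\<^esub> extd p q a" using k ext_add[OF pq kc a] by simp
  then have "extd p q b \<in> colim_relations R M q +>\<^bsub>dsum_module R M q\<^esub> extd p q a"
    using cos_in[OF D_module K_sub ext_car[OF pq a] ext_K[OF pq k(1)]] by simp
  then show "A = colim_relations R M q +>\<^bsub>dsum_module R M q\<^esub> extd p q a"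
    unfolding A by (rule cos_repr[OF D_module K_sub ext_car[OF pq a]])
next
  show "colim_relations R M q +>\<^bsub>dsum_module R M q\<^esub> extd p q a
    \<in> {colim_relations R M q +>\<^bsub>dsum_module R M q\<^esub> extd p q b |b. b \<in> colim_relations R M p +>\<^bsub>dsum_module R M p\<^esub> a}"
    using cos_self[OF D_module K_sub a] by blast
qed

definition Gm :: "'p \<Rightarrow> 'p \<Rightarrow> ('p \<Rightarrow> 'm) set \<Rightarrow> 'm" where
  "Gm p r A = Phi p r (SOME a. a \<in> A)"

lemma Gm_cos:
  assumes pr: "p \<le> r" and a: "a \<in> carrier (dsum_module R M p)"
  shows "Gm p r (colim_relations R M p +>\<^bsub>dsum_module R M p\<^esub> a) = Phi p r a"
proof -
  interpret Mr: module R "fst M r" by (rule modx)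
  let ?b = "SOME b. b \<in> colim_relations R M p +>\<^bsub>dsum_module R M p\<^esub> a"
  have ex: "\<exists>b. b \<in> colim_relations R M p +>\<^bsub>dsum_module R M p\<^esub> a"
    using cos_self[OF D_module K_sub a] by blast
  have bb: "?b \<in> colim_relations R M p +>\<^bsub>dsum_module R M p\<^esub> a"
    using someI_ex[OF ex] .
  obtain k where k: "k \<in> colim_relations R M p" "?b = k \<oplus>\<^bsub>dsum_module R M p\<^esub> a"
    using cos_elem[OF bb] by blast
  have kc: "k \<in> carrier (dsum_module R M p)" using k K_car by blast
  have "Phi p r ?b = Phi p r (k \<oplus>\<^bsub>dsum_module R M p\<^esub> a)" using k(2) by (rule arg_cong)
  also have "\<dots> = Phi p r k \<oplus>\<^bsub>fst M r\<^esub> Phi p r a" by (rule Phi_add[OF pr kc a])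
  also have "\<dots> = Phi p r a" by (simp only: Phi_K[OF pr k(1)] Mr.l_zero[OF Phi_closed[OF pr a]])
  finally show ?thesis unfolding Gm_def .
qed

end



lemma additive_comp: "additive A B f \<Longrightarrow> additive B C h \<Longrightarrow> additive A C (\<lambda>a. h (f a))"
  unfolding additive_def by (auto simp: Pi_iff)

lemma ag_sub_add:
  assumes "abelian_group G" "x \<in> carrier G" "y \<in> carrier G" "u \<in> carrier G" "v \<in> carrier G"
  shows "(x \<oplus>\<^bsub>G\<^esub> y) \<ominus>\<^bsub>G\<^esub> (u \<oplus>\<^bsub>G\<^esub> v) = (x \<ominus>\<^bsub>G\<^esub> u) \<oplus>\<^bsub>G\<^esub> (y \<ominus>\<^bsub>G\<^esub> v)"
proof -
  interpret G: abelian_group G by fact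
  show ?thesis using assms(2-5) by (simp add: a_minus_def G.minus_add G.a_ac)
qed

lemma ag_neg_sub:
  assumes "abelian_group G" "u \<in> carrier G" "v \<in> carrier G"
  shows "\<ominus>\<^bsub>G\<^esub> (u \<ominus>\<^bsub>G\<^esub> v) = v \<ominus>\<^bsub>G\<^esub> u"
proof -
  interpret G: abelian_group G by fact
  show ?thesis using assms(2-3) by (simp add: a_minus_def G.minus_add G.minus_minus G.a_comm)
qed

lemma additive_sub:
  assumes "additive A B f" "additive A B h" "abelian_group B"
  shows "additive A B (\<lambda>a. f a \<ominus>\<^bsub>B\<^esub> h a)"
proof -
  interpret B: abelian_group B by fact
  show ?thesis using assms(1,2) unfolding additive_def
    by (auto simp: Pi_iff ag_sub_add[OF assms(3)])
qed

context pmodR begin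

lemma upper_interleaved:
  assumes mono: "mono (T e)" and inc: "\<And>p. p \<le> T e p" and tr: "\<And>x. x \<lless> T e x"
  shows "interleaved R T e M (upper_pmod R M)"
proof -
  define t where "t = T e"
  have monot: "p \<le> q \<Longrightarrow> t p \<le> t q" for p q using mono unfolding t_def mono_def by auto
  have inct: "p \<le> t p" for p using inc unfolding t_def by auto
  have trt: "x \<lless> t x" for x using tr unfolding t_def by auto
  have uf: "fst (upper_pmod R M) = colim_module R M" unfolding upper_pmod_def by simp
  have us: "snd (upper_pmod R M) = colim_map R M" unfolding upper_pmod_def by simp
  define f where "f = (\<lambda>p m. colim_relations R M (t p) +>\<^bsub>dsum_module R M (t p)\<^esub> dsum_incl M (t p) p m)"
  define g where "g = (\<lambda>p A. Gm p (t p) A)"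
  have cosE: "\<exists>a. a \<in> carrier (dsum_module R M q) \<and> A = colim_relations R M q +>\<^bsub>dsum_module R M q\<^esub> a"
    if "A \<in> carrier (colim_module R M q)" for A q
    using that unfolding colim_car by blast
  have F: "is_pmorph R M (pullback t (upper_pmod R M)) f"
    unfolding is_pmorph_def pb_fst pb_snd uf us
  proof (intro conjI allI impI ballI)
    fix p
    show "linear_map R (fst M p) (colim_module R M (t p)) (f p)"
      unfolding linear_map_def
    proof (intro conjI ballI Pi_I)
      fix m assume m: "m \<in> carrier (fst M p)"
      then show "f p m \<in> carrier (colim_module R M (t p))"
        unfolding colim_car f_def using inc_car[OF trt m] by blast
    next
      fix m n assume m: "m \<in> carrier (fst M p)" and n: "n \<in> carrier (fst M p)"
      show "f p (m \<oplus>\<^bsub>fst M p\<^esub> n) = f p m \<oplus>\<^bsub>colim_module R M (t p)\<^esub> f p n"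
        unfolding f_def inc_add[OF trt m n] by (rule colim_add_cos[symmetric, OF inc_car[OF trt m] inc_car[OF trt n]])
    next
      fix c m assume c: "c \<in> carrier R" and m: "m \<in> carrier (fst M p)"
      show "f p (c \<odot>\<^bsub>fst M p\<^esub> m) = c \<odot>\<^bsub>colim_module R M (t p)\<^esub> f p m"
        unfolding f_def inc_smult[OF trt c m] by (rule colim_smult_cos[symmetric, OF inc_car[OF trt m] c])
    qed
  next
    fix p q m assume pq: "p \<le> q" and m: "m \<in> carrier (fst M p)"
    have ptq: "p \<lless> t q" using wb_trans_le[OF trt monot[OF pq]] .
    have qm: "snd M p q m \<in> carrier (fst M q)" using mp_closed[OF pq m] .
    have "colim_map R M (t p) (t q) (f p m) = colim_relations R M (t q) +>\<^bsub>dsum_module R M (t q)\<^esub> dsum_incl M (t q) p m"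
      unfolding f_def colim_map_cos[OF monot[OF pq] inc_car[OF trt m]] ext_inc[OF monot[OF pq] trt] ..
    also have "\<dots> = f q (snd M p q m)"
      unfolding f_def
      by (rule cos_eq[OF D_module K_sub inc_car[OF ptq m] inc_car[OF trt qm] K_gen[OF ptq trt pq m]])
    finally show "f q (snd M p q m) = colim_map R M (t p) (t q) (f p m)" by simp
  qed
  have G: "is_pmorph R (upper_pmod R M) (pullback t M) g"
    unfolding is_pmorph_def pb_fst pb_snd uf us
  proof (intro conjI allI impI ballI)
    fix p
    show "linear_map R (colim_module R M p) (fst M (t p)) (g p)"
      unfolding linear_map_def
    proof (intro conjI ballI Pi_I)
      fix A assume "A \<in> carrier (colim_module R M p)"
      then obtain a where a: "a \<in> carrier (dsum_module R M p)" "A = colim_relations R M p +>\<^bsub>dsum_module R M p\<^esub> a"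
        using cosE by blast
      show "g p A \<in> carrier (fst M (t p))"
        unfolding g_def a(2) Gm_cos[OF inct a(1)] by (rule Phi_closed[OF inct a(1)])
    next
      fix A B assume "A \<in> carrier (colim_module R M p)" "B \<in> carrier (colim_module R M p)"
      then obtain a b where a: "a \<in> carrier (dsum_module R M p)" "A = colim_relations R M p +>\<^bsub>dsum_module R M p\<^esub> a"
        and b: "b \<in> carrier (dsum_module R M p)" "B = colim_relations R M p +>\<^bsub>dsum_module R M p\<^esub> b"
        using cosE by meson
      have ab: "a \<oplus>\<^bsub>dsum_module R M p\<^esub> b \<in> carrier (dsum_module R M p)"
        using abelian_monoid.a_closed[OF abelian_group.axioms(1)[OF D_abelian] a(1) b(1)] .
      show "g p (A \<oplus>\<^bsub>colim_module R M p\<^esub> B) = g p A \<oplus>\<^bsub>fst M (t p)\<^esub> g p B"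
        unfolding g_def a(2) b(2) colim_add_cos[OF a(1) b(1)] Gm_cos[OF inct a(1)] Gm_cos[OF inct b(1)] Gm_cos[OF inct ab]
        by (rule Phi_add[OF inct a(1) b(1)])
    next
      fix c A assume c: "c \<in> carrier R" and "A \<in> carrier (colim_module R M p)"
      then obtain a where a: "a \<in> carrier (dsum_module R M p)" "A = colim_relations R M p +>\<^bsub>dsum_module R M p\<^esub> a"
        using cosE by blast
      have ca: "c \<odot>\<^bsub>dsum_module R M p\<^esub> a \<in> carrier (dsum_module R M p)"
        using module.smult_closed[OF D_module c a(1)] .
      show "g p (c \<odot>\<^bsub>colim_module R M p\<^esub> A) = c \<odot>\<^bsub>fst M (t p)\<^esub> g p A"
        unfolding g_def a(2) colim_smult_cos[OF a(1) c] Gm_cos[OF inct a(1)] Gm_cos[OF inct ca]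
        by (rule Phi_smult[OF inct c a(1)])
    qed
  next
    fix p q A assume pq: "p \<le> q" and "A \<in> carrier (colim_module R M p)"
    then obtain a where a: "a \<in> carrier (dsum_module R M p)" "A = colim_relations R M p +>\<^bsub>dsum_module R M p\<^esub> a"
      using cosE by blast
    have ptq: "p \<le> t q" using order_trans[OF pq inct] .
    have "Phi q (t q) (extd p q a) = snd M (t p) (t q) (Phi p (t p) a)"
    proof (rule additive_agree[OF _ _ agx _ a(1)])
      show "additive (dsum_module R M p) (fst M (t q)) (\<lambda>a. Phi q (t q) (extd p q a))"
        by (rule additive_comp[OF ext_additive[OF pq] Phi_additive[OF inct]])
      show "additive (dsum_module R M p) (fst M (t q)) (\<lambda>a. snd M (t p) (t q) (Phi p (t p) a))"
        by (rule additive_comp[OF Phi_additive[OF inct] linear_additive[OF linx[OF monot[OF pq]]]])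
      fix x m assume x: "x \<lless> p" and m: "m \<in> carrier (fst M x)"
      have xq: "x \<lless> q" using wb_trans_le[OF x pq] .
      show "Phi q (t q) (extd p q (dsum_incl M p x m)) = snd M (t p) (t q) (Phi p (t p) (dsum_incl M p x m))"
        unfolding ext_inc[OF pq x] Phi_inc[OF xq inct m] Phi_inc[OF x inct m]
        using mp_comp[OF wq[OF x inct] monot[OF pq] m] by simp
    qed
    then show "g q (colim_map R M p q A) = snd M (t p) (t q) (g p A)"
      unfolding g_def a(2) colim_map_cos[OF pq a(1)] Gm_cos[OF inct ext_car[OF pq a(1)]] Gm_cos[OF inct a(1)] .
  qed
  have I1: "g (t p) (f p m) = snd M p (t (t p)) m" if m: "m \<in> carrier (fst M p)" for p m
    unfolding g_def f_def Gm_cos[OF inct inc_car[OF trt m]] Phi_inc[OF trt inct m] ..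
  have I2: "f (t p) (g p A) = colim_map R M p (t (t p)) A"
    if A: "A \<in> carrier (colim_module R M p)" for p A
  proof -
    obtain a where a: "a \<in> carrier (dsum_module R M p)" "A = colim_relations R M p +>\<^bsub>dsum_module R M p\<^esub> a"
      using cosE[OF A] by blast
    have ptt: "p \<le> t (t p)" using order_trans[OF inct inct] .
    have tt: "t p \<lless> t (t p)" by (rule trt)
    interpret DD: module R "dsum_module R M (t (t p))" by (rule D_module)
    note Ks = DD.submoduleE[OF K_sub]
    define h where "h = (\<lambda>a. dsum_incl M (t (t p)) (t p) (Phi p (t p) a) \<ominus>\<^bsub>dsum_module R M (t (t p))\<^esub> extd p (t (t p)) a)"
    have "h a \<in> colim_relations R M (t (t p))"
    proof (rule additive_into[OF _ D_abelian _ _ _ a(1)])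
      show "additive (dsum_module R M p) (dsum_module R M (t (t p))) h"
        unfolding h_def
        by (rule additive_sub[OF additive_comp[OF Phi_additive[OF inct] inc_additive[OF tt]] ext_additive[OF ptt] D_abelian])
      show "\<zero>\<^bsub>dsum_module R M (t (t p))\<^esub> \<in> colim_relations R M (t (t p))"
        using subgroup.one_closed[OF submodule.axioms(1)[OF K_sub]] by simp
      show "u \<oplus>\<^bsub>dsum_module R M (t (t p))\<^esub> v \<in> colim_relations R M (t (t p))"
        if "u \<in> colim_relations R M (t (t p))" "v \<in> colim_relations R M (t (t p))" for u v
        using Ks(5) that by blast
      fix x m assume x: "x \<lless> p" and m: "m \<in> carrier (fst M x)"
      have xt: "x \<lless> t (t p)" using wb_trans_le[OF x ptt] .
      have xtp: "x \<le> t p" using wq[OF x inct] .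
      have mm: "snd M x (t p) m \<in> carrier (fst M (t p))" using mp_closed[OF xtp m] .
      have "h (dsum_incl M p x m) = \<ominus>\<^bsub>dsum_module R M (t (t p))\<^esub> (dsum_incl M (t (t p)) x m \<ominus>\<^bsub>dsum_module R M (t (t p))\<^esub> dsum_incl M (t (t p)) (t p) (snd M x (t p) m))"
        unfolding h_def Phi_inc[OF x inct m] ext_inc[OF ptt x]
        by (rule ag_neg_sub[symmetric, OF D_abelian inc_car[OF xt m] inc_car[OF tt mm]])
      also have "\<dots> \<in> colim_relations R M (t (t p))"
        by (rule Ks(3)[OF K_gen[OF xt tt xtp m]])
      finally show "h (dsum_incl M p x m) \<in> colim_relations R M (t (t p))" .
    qed
    then have "f (t p) (Phi p (t p) a) = colim_relations R M (t (t p)) +>\<^bsub>dsum_module R M (t (t p))\<^esub> extd p (t (t p)) a"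
      unfolding f_def h_def
      by (rule cos_eq[OF D_module K_sub inc_car[OF tt Phi_closed[OF inct a(1)]] ext_car[OF ptt a(1)]])
    then show ?thesis unfolding g_def a(2) Gm_cos[OF inct a(1)] colim_map_cos[OF ptt a(1)] .
  qed
  show ?thesis unfolding interleaved_def t_def[symmetric] uf us
    apply (rule exI[of _ f], rule exI[of _ g])
    using F G I1 I2 unfolding uf us by simp
qed

end

theorem mainTheorem18:
  fixes R :: "'k ring"
    and T :: "real \<Rightarrow> 'p::order \<Rightarrow> 'p"
    and M :: "('p, 'k, 'm) pmod"
  assumes "cring R"
    and "continuous_poset TYPE('p)"
    and "\<forall>\<epsilon>\<ge>0. translation (T \<epsilon>) \<and> scott_continuous (T \<epsilon>)"
    and "superlinear T"
    and "TR2 T"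
    and "is_pmod R M"
  shows "interleaving_dist R T M (lower_pmod R M) = 0
       \<and> interleaving_dist R T M (upper_pmod R M) = 0
       \<and> (ephemeral M \<longrightarrow> interleaving_dist R T M (zero_pmod :: ('p, 'k, unit) pmod) = 0)"
proof -
  interpret P: pmodR R M by (rule pmodR.intro) (fact assms(1), fact assms(6))
  have mo: "mono (T e)" and ic: "\<And>p. p \<le> T e p" and tw: "\<And>x. x \<lless> T e x" if "e > 0" for e
    using assms(3,5) that unfolding translation_def TR2_def by auto
  have L: "interleaving_dist R T M (lower_pmod R M) = 0"
    by (rule dist_zero, rule P.lower_interleaved[OF mo ic tw])
  have U: "interleaving_dist R T M (upper_pmod R M) = 0"
    by (rule dist_zero, rule P.upper_interleaved[OF mo ic tw])
  have Z: "ephemeral M \<longrightarrow> interleaving_dist R T M (zero_pmod :: ('p, 'k, unit) pmod) = 0"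
  proof
    assume "ephemeral M"
    then show "interleaving_dist R T M (zero_pmod :: ('p, 'k, unit) pmod) = 0"
      by (intro dist_zero P.zero_interleaved mo ic tw)
  qed
  show ?thesis using L U Z by blast
qed

end
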